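(* Let $d>1$ and $\gamma>0$, and let $K(x,y)=e^{-\gamma\|x-y\|_2^2}$ be the Gaussian kernel on $\mathbb{R}^d$. There exists a finite dataset $X\subset\mathbb{R}^d$ such that for every $D\in\mathbb{N}$ and every map $\phi=(\phi_1,\dots,\phi_D):X\to\mathbb{R}^D$ satisfying $\langle\phi(x),\phi(y)\rangle=\sum_{j=1}^D\phi_j(x)\phi_j(y)=K(x,y)$ for all $x,y\in X$, there exists some $j\in[D]$ such that $\phi_j$ depends on more than one input coordinate, i.e. there is no $i\in[d]$ and no function $h:\mathbb{R}\to\mathbb{R}$ with $\phi_j(x)=h(x_i)$ for all $x\in X$.
   Context: For $x\in\mathbb{R}^d$, $x_i$ denotes its $i$-th coordinate; $[D]=\{1,\dots,D\}$. A feature map $\phi:X\to\mathbb{R}^D$ is called interpretable if each component $\phi_j$ depends on exactly one coordinate of $x$; the theorem says no feature map of the Gaussian kernel on this $X$ is interpretable. *)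

theory Defs
  imports "HOL-Analysis.Analysis"
begin

definition gauss_kernel :: "real \<Rightarrow> real ^ 'd \<Rightarrow> real ^ 'd \<Rightarrow> real" where
  "gauss_kernel \<gamma> x y = exp (- \<gamma> * (norm (x - y))\<^sup>2)"

end

theory Submission
  imports Defs
begin

theorem theorem1:
  fixes \<gamma> :: real
  assumes "CARD('d) > 1" and "\<gamma> > 0"
  shows "\<exists>X :: (real ^ 'd) set. finite X \<and>
    (\<forall>(D::nat) (\<phi> :: real ^ 'd \<Rightarrow> nat \<Rightarrow> real).
       (\<forall>x\<in>X. \<forall>y\<in>X. (\<Sum>j<D. \<phi> x j * \<phi> y j) = gauss_kernel \<gamma> x y) \<longrightarrow>
       (\<exists>j<D. \<not> (\<exists>(i::'d) (h::real \<Rightarrow> real). \<forall>x\<in>X. \<phi> x j = h (x $ i))))"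
proof -
  obtain a b :: 'd where ab: "a \<noteq> b"
  proof -
    have "\<not> (\<forall>x\<in>(UNIV::'d set). \<forall>y\<in>UNIV. x = y)"
      using assms(1) card_le_Suc0_iff_eq[of "UNIV::'d set"] by simp
    then show ?thesis using that by blast
  qed
  define ea :: "real ^ 'd" where "ea = axis a 1"
  define eb :: "real ^ 'd" where "eb = axis b 1"
  define X where "X = {0, ea, eb, ea + eb}"
  have k1: "gauss_kernel \<gamma> (0::real^'d) 0 = 1" by (simp add: gauss_kernel_def)
  have k2: "gauss_kernel \<gamma> 0 ea = exp (- \<gamma>)" "gauss_kernel \<gamma> 0 eb = exp (- \<gamma>)"
    by (simp_all add: gauss_kernel_def ea_def eb_def)
  have "(norm (ea + eb))\<^sup>2 = 2"
    using ab by (simp add: power2_norm_eq_inner ea_def eb_def inner_add_left inner_add_right inner_axis_axis)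
  then have k3: "gauss_kernel \<gamma> 0 (ea + eb) = exp (- (2 * \<gamma>))"
    by (simp add: gauss_kernel_def norm_minus_commute add.commute)
  have ineq: "1 + exp (- (2 * \<gamma>)) \<noteq> 2 * exp (- \<gamma>)"
  proof
    assume h: "1 + exp (- (2 * \<gamma>)) = 2 * exp (- \<gamma>)"
    have e2: "exp (- (2 * \<gamma>)) = (exp (- \<gamma>))\<^sup>2"
      by (simp add: power2_eq_square exp_add[symmetric])
    have "exp (- \<gamma>) < 1" using assms(2) by simp
    then have "(1 - exp (- \<gamma>))\<^sup>2 > 0" by simp
    with h e2 show False by (simp add: power2_eq_square algebra_simps)
  qed
  have "\<forall>(D::nat) (\<phi> :: real ^ 'd \<Rightarrow> nat \<Rightarrow> real).
       (\<forall>x\<in>X. \<forall>y\<in>X. (\<Sum>j<D. \<phi> x j * \<phi> y j) = gauss_kernel \<gamma> x y) \<longrightarrow>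
       (\<exists>j<D. \<not> (\<exists>(i::'d) (h::real \<Rightarrow> real). \<forall>x\<in>X. \<phi> x j = h (x $ i)))"
  proof (intro allI impI, rule ccontr)
    fix D and \<phi> :: "real ^ 'd \<Rightarrow> nat \<Rightarrow> real"
    assume H: "\<forall>x\<in>X. \<forall>y\<in>X. (\<Sum>j<D. \<phi> x j * \<phi> y j) = gauss_kernel \<gamma> x y"
    assume "\<not> (\<exists>j<D. \<not> (\<exists>(i::'d) (h::real \<Rightarrow> real). \<forall>x\<in>X. \<phi> x j = h (x $ i)))"
    then have S: "\<And>j. j < D \<Longrightarrow> \<exists>(i::'d) (h::real \<Rightarrow> real). \<forall>x\<in>X. \<phi> x j = h (x $ i)" by blast
    have lin: "\<phi> 0 j + \<phi> (ea + eb) j = \<phi> ea j + \<phi> eb j" if jD: "j < D" for j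
    proof -
      obtain i h where hi: "\<forall>x\<in>X. \<phi> x j = h (x $ i)" using S[OF jD] by blast
      then have "\<phi> 0 j = h (0 $ i)" "\<phi> ea j = h (ea $ i)" "\<phi> eb j = h (eb $ i)"
        "\<phi> (ea + eb) j = h ((ea + eb) $ i)" by (auto simp: X_def)
      then show ?thesis using ab
        by (cases "i = a"; cases "i = b") (auto simp: ea_def eb_def axis_def)
    qed
    have "(\<Sum>j<D. \<phi> 0 j * \<phi> 0 j) + (\<Sum>j<D. \<phi> 0 j * \<phi> (ea + eb) j)
        = (\<Sum>j<D. \<phi> 0 j * (\<phi> 0 j + \<phi> (ea + eb) j))"
      by (simp add: sum.distrib distrib_left)
    also have "\<dots> = (\<Sum>j<D. \<phi> 0 j * (\<phi> ea j + \<phi> eb j))"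
      using lin by (intro sum.cong) auto
    also have "\<dots> = (\<Sum>j<D. \<phi> 0 j * \<phi> ea j) + (\<Sum>j<D. \<phi> 0 j * \<phi> eb j)"
      by (simp add: sum.distrib distrib_left)
    finally have E: "(\<Sum>j<D. \<phi> 0 j * \<phi> 0 j) + (\<Sum>j<D. \<phi> 0 j * \<phi> (ea + eb) j)
        = (\<Sum>j<D. \<phi> 0 j * \<phi> ea j) + (\<Sum>j<D. \<phi> 0 j * \<phi> eb j)" .
    have m: "0 \<in> X" "ea \<in> X" "eb \<in> X" "ea + eb \<in> X" by (auto simp: X_def)
    have "gauss_kernel \<gamma> (0::real^'d) 0 + gauss_kernel \<gamma> 0 (ea + eb)
        = gauss_kernel \<gamma> 0 ea + gauss_kernel \<gamma> 0 eb"
      using E unfolding H[rule_format, OF m(1) m(1)] H[rule_format, OF m(1) m(2)] H[rule_format, OF m(1) m(3)]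
        H[rule_format, OF m(1) m(4)] .
    with k1 k2 k3 ineq show False by simp
  qed
  moreover have "finite X" by (simp add: X_def)
  ultimately show ?thesis by blast
qed

end
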